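(* Let $\mathbf{A}\in\mathbb{R}^{n\times d}$ have full column rank, $k\in[d]$ with $2k\le d$, and $\alpha\ge1$. Define $T:=\lceil\sqrt{\log(d/(2k))/\alpha}\rceil$ and $k_t:=\max\{\lceil d\exp(-\alpha t^2)\rceil,2k\}$ for all $t\in\{0,1,\dots,T\}$. Then for all $p\in[1,100]$, $\eta\in(0,1)$, and $t\in[T]$, $$k_{t-1}^p\sqrt{\frac{\overline{\Sigma}_{k_t}(\mathbf{A})}{\sigma_d(\mathbf{A})^2}}\exp(\alpha t)=O\Big(d^p\,\bar\kappa_{k,p^{-1}+\eta}(\mathbf{A})\exp\Big(\alpha\Big(p(c_p^2-1)+\frac{c_p^2}{\eta}\Big)\Big)\Big),\quad\text{where } c_p:=1+\frac{1}{2p},$$ and the constant in $O(\cdot)$ is absolute (independent of $\mathbf{A},d,k,\alpha,p,\eta,t$).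
   Context: $n\ge d$; $\sigma_1(\mathbf{A})\ge\cdots\ge\sigma_d(\mathbf{A})>0$ are the singular values of $\mathbf{A}$; $\overline{\Sigma}_k(\mathbf{A}):=\frac1k\sum_{i>k}\sigma_i(\mathbf{A})^2$; for $q\in(0,\infty)$, $\bar\kappa_{k,q}(\mathbf{A}):=\big(\frac{1}{d-k}\sum_{i>k}\sigma_i(\mathbf{A})^q/\sigma_d(\mathbf{A})^q\big)^{1/q}$; $\log$ is the natural logarithm. *)

theory Defs
  imports "Jordan_Normal_Form.DL_Rank" "Jordan_Normal_Form.Char_Poly"
    "HOL-Computational_Algebra.Polynomial" "HOL-Library.Multiset"
begin

text \<open>Singular values of a real matrix A (of dimension n x d): the square roots of the
  eigenvalues (with algebraic multiplicity) of the Gram matrix A^T A, listed in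
  non-increasing order.  sigma A i is the i-th singular value, 1-indexed.\<close>
definition sing_vals :: "real mat \<Rightarrow> real list" where
  "sing_vals A = map sqrt (rev (sorted_list_of_multiset
      (proots (char_poly (transpose_mat A * A)))))"

definition sigma :: "real mat \<Rightarrow> nat \<Rightarrow> real" where
  "sigma A i = sing_vals A ! (i - 1)"

definition full_col_rank :: "real mat \<Rightarrow> bool" where
  "full_col_rank A \<longleftrightarrow> vec_space.rank (dim_row A) A = dim_col A"

definition SigmaBar :: "nat \<Rightarrow> real mat \<Rightarrow> real" where
  "SigmaBar k A = (1 / real k) * (\<Sum>i\<in>{k<..dim_col A}. (sigma A i)\<^sup>2)"

definition kappaBar :: "nat \<Rightarrow> real \<Rightarrow> real mat \<Rightarrow> real" where
  "kappaBar k q A = ((1 / real (dim_col A - k)) *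
     (\<Sum>i\<in>{k<..dim_col A}. (sigma A i) powr q / (sigma A (dim_col A)) powr q)) powr (1 / q)"

definition Tpar :: "nat \<Rightarrow> nat \<Rightarrow> real \<Rightarrow> nat" where
  "Tpar d k \<alpha> = nat \<lceil>sqrt (ln (real d / (2 * real k)) / \<alpha>)\<rceil>"

definition kseq :: "nat \<Rightarrow> nat \<Rightarrow> real \<Rightarrow> nat \<Rightarrow> nat" where
  "kseq d k \<alpha> t = max (nat \<lceil>real d * exp (- \<alpha> * (real t)\<^sup>2)\<rceil>) (2 * k)"

end

theory Submission
  imports Defs
begin


lemma gram_entry:
  fixes A :: "real mat"
  assumes A: "A \<in> carrier_mat n d" and i: "i < d" and j: "j < d"
  shows "(transpose_mat A * A) $$ (i,j) = (\<Sum>l<n. A $$ (l,i) * A $$ (l,j))"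
  using A i j by (auto simp: scalar_prod_def lessThan_atLeast0 intro!: sum.cong)

lemma eig_real_nonneg:
  fixes A :: "real mat"
  assumes A: "A \<in> carrier_mat n d"
  and ev: "eigenvalue (map_mat complex_of_real (transpose_mat A * A)) a"
  shows "a = of_real (Re a) \<and> Re a \<ge> 0"
proof -
  let ?M = "map_mat complex_of_real (transpose_mat A * A)"
  have Mc: "?M \<in> carrier_mat d d" using A by auto
  obtain v where v: "v \<in> carrier_vec d" "v \<noteq> 0\<^sub>v d" "?M *\<^sub>v v = a \<cdot>\<^sub>v v"
    using ev Mc unfolding eigenvalue_def eigenvector_def by auto
  define w where "w l = (\<Sum>j<d. complex_of_real (A $$ (l,j)) * v $ j)" for l
  have eq: "(\<Sum>j<d. complex_of_real (\<Sum>l<n. A $$ (l,i) * A $$ (l,j)) * v $ j) = a * v $ i" if i: "i < d" for i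
  proof -
    have "(?M *\<^sub>v v) $ i = a * v $ i" using v(3) v(1) i by simp
    moreover have "(?M *\<^sub>v v) $ i = (\<Sum>j<d. ?M $$ (i,j) * v $ j)"
      using i v(1) A by (auto simp: scalar_prod_def lessThan_atLeast0 intro!: sum.cong)
    moreover have "?M $$ (i,j) = complex_of_real (\<Sum>l<n. A $$ (l,i) * A $$ (l,j))" if "j < d" for j
      using gram_entry[OF A i that] i that A by simp
    ultimately show ?thesis by simp
  qed
  have "(\<Sum>i<d. cnj (v $ i) * (a * v $ i)) = (\<Sum>i<d. cnj (v $ i) * (\<Sum>j<d. complex_of_real (\<Sum>l<n. A $$ (l,i) * A $$ (l,j)) * v $ j))"
    using eq by simp
  also have "\<dots> = (\<Sum>i<d. \<Sum>j<d. \<Sum>l<n. cnj (v $ i) * complex_of_real (A $$ (l,i)) * (complex_of_real (A $$ (l,j)) * v $ j))"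
    by (simp add: sum_distrib_left sum_distrib_right mult_ac)
  also have "\<dots> = (\<Sum>l<n. \<Sum>i<d. \<Sum>j<d. cnj (v $ i) * complex_of_real (A $$ (l,i)) * (complex_of_real (A $$ (l,j)) * v $ j))"
    by (simp add: sum.swap[of _ "{..<n}"])
  also have "\<dots> = (\<Sum>l<n. cnj (w l) * w l)"
    unfolding w_def cnj_sum complex_cnj_mult complex_cnj_complex_of_real by (simp only: sum_product) (simp add: mult_ac)
  finally have key: "a * (\<Sum>i<d. cnj (v $ i) * v $ i) = (\<Sum>l<n. cnj (w l) * w l)"
    by (simp add: sum_distrib_left mult_ac)
  have cs: "cnj z * z = complex_of_real ((cmod z)\<^sup>2)" for z
    using complex_norm_square[of z] by (simp add: mult.commute)
  define R1 where "R1 = (\<Sum>i<d. (cmod (v $ i))\<^sup>2)"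
  define R2 where "R2 = (\<Sum>l<n. (cmod (w l))\<^sup>2)"
  have key2: "a * complex_of_real R1 = complex_of_real R2"
    using key unfolding R1_def R2_def cs by simp
  have "\<exists>i<d. v $ i \<noteq> 0"
    using v(1,2) by (metis carrier_vecD eq_vecI index_zero_vec(1,2))
  then obtain i where i: "i < d" "v $ i \<noteq> 0" by blast
  have "R1 \<ge> (cmod (v $ i))\<^sup>2" unfolding R1_def
    by (rule member_le_sum) (use i in auto)
  hence R1: "R1 > 0" using i by (smt (verit) norm_eq_zero zero_less_power2)
  have R2: "R2 \<ge> 0" unfolding R2_def by (auto intro: sum_nonneg)
  have "a = complex_of_real (R2 / R1)" using key2 R1
    by (metis nonzero_mult_div_cancel_right of_real_divide of_real_eq_0_iff less_irrefl)
  then show ?thesis using R1 R2 by simp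
qed

lemma sum_list_singletons: "sum_list (map (\<lambda>r. {#r#}) rs) = mset rs"
  by (induction rs) auto

lemma proots_lin: "proots (\<Prod>r\<leftarrow>rs. [:- r, 1:]) = mset (rs :: real list)"
proof (induction rs)
  case (Cons r rs)
  have "(\<Prod>r\<leftarrow>rs. [:- r, 1:]) \<noteq> 0" by (auto simp: prod_list_zero_iff)
  moreover have "[:- r, 1:] \<noteq> 0" by simp
  ultimately have "proots ([:- r, 1:] * (\<Prod>r\<leftarrow>rs. [:- r, 1:])) = proots [:- r, 1:] + proots (\<Prod>r\<leftarrow>rs. [:- r, 1:])"
    by (intro proots_mult)
  also have "\<dots> = {#r#} + mset rs" using Cons by (simp del: pCons_eq_iff)
  finally show ?case by simp
qed simp

lemma sing_vals_props:
  fixes A :: "real mat"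
  assumes A: "A \<in> carrier_mat n d"
  shows "length (sing_vals A) = d \<and> (\<forall>i<d. sing_vals A ! i \<ge> 0) \<and>
    (\<forall>i j. i \<le> j \<longrightarrow> j < d \<longrightarrow> sing_vals A ! j \<le> sing_vals A ! i)"
proof -
  let ?M = "transpose_mat A * A"
  have M: "?M \<in> carrier_mat d d" using A by auto
  let ?Mc = "map_mat complex_of_real ?M"
  have Mc: "?Mc \<in> carrier_mat d d" using M by auto
  have cp: "char_poly ?Mc = map_poly complex_of_real (char_poly ?M)"
    by (rule of_real_hom.char_poly_hom[OF M])
  obtain as where as: "char_poly ?Mc = (\<Prod>a\<leftarrow>as. [:- a, 1:])" "length as = d"
    using char_poly_factorized[OF Mc] by blast
  have asr: "a = of_real (Re a) \<and> Re a \<ge> 0" if a: "a \<in> set as" for a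
  proof -
    have "poly (char_poly ?Mc) a = 0" unfolding as(1) poly_prod_list_zero_iff
      using a by auto
    hence "eigenvalue ?Mc a" using eigenvalue_root_char_poly[OF Mc] by simp
    thus ?thesis by (rule eig_real_nonneg[OF A])
  qed
  define rs where "rs = map Re as"
  have as_rs: "as = map complex_of_real rs" unfolding rs_def
    by (simp add: o_def) (metis (mono_tags, lifting) asr map_idI)
  interpret mp: map_poly_comm_ring_hom "complex_of_real" ..
  have "map_poly complex_of_real (char_poly ?M) = map_poly complex_of_real (\<Prod>r\<leftarrow>rs. [:- r, 1:])"
    unfolding cp[symmetric] as(1) as_rs mp.hom_prod_list by (simp add: o_def)
  hence cpM: "char_poly ?M = (\<Prod>r\<leftarrow>rs. [:- r, 1:])"
    by (metis (no_types, lifting) coeff_map_poly of_real_0 of_real_eq_iff poly_eqI)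
  have "proots (char_poly ?M) = mset rs"
    unfolding cpM by (rule proots_lin)
  hence sv: "sing_vals A = map sqrt (rev (sort rs))"
    unfolding sing_vals_def by simp
  have len: "length rs = d" using as(2) rs_def by simp
  have nn: "\<forall>r\<in>set rs. r \<ge> 0" using asr unfolding rs_def by auto
  show ?thesis
  proof (intro conjI allI impI)
    show "length (sing_vals A) = d" using sv len by simp
  next
    fix i assume i: "i < d"
    have "rev (sort rs) ! i \<in> set rs"
      by (metis i len length_rev length_sort nth_mem set_rev set_sort)
    thus "sing_vals A ! i \<ge> 0" using sv i len nn by auto
  next
    fix i j assume ij: "i \<le> j" "j < d"
    have "sort rs ! (d - Suc j) \<le> sort rs ! (d - Suc i)"
      by (rule sorted_nth_mono) (use ij len in auto)
    thus "sing_vals A ! j \<le> sing_vals A ! i" using sv ij len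
      by (auto simp: rev_nth)
  qed
qed



lemma core:
  fixes s :: "nat \<Rightarrow> real" and d k m :: nat and q :: real
  assumes nonneg: "\<And>i. 1 \<le> i \<Longrightarrow> i \<le> d \<Longrightarrow> s i \<ge> 0"
    and mono: "\<And>i j. 1 \<le> i \<Longrightarrow> i \<le> j \<Longrightarrow> j \<le> d \<Longrightarrow> s j \<le> s i"
    and k: "1 \<le> k" and km: "2 * k \<le> m" and md: "m \<le> d" and q: "0 < q" "q < 2"
    and sd: "s d > 0"
  shows "sqrt ((1 / real m) * (\<Sum>i\<in>{m<..d}. (s i)\<^sup>2) / (s d)\<^sup>2)
     \<le> (2 * (\<Sum>i\<in>{k<..d}. s i powr q / s d powr q) / real m) powr (1 / q)"
proof -
  define x where "x i = s i / s d" for i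
  have x1: "x i \<ge> 1" if "k < i" "i \<le> d" for i
    using mono[of i d] that k sd unfolding x_def by simp
  have xq: "s i powr q / s d powr q = x i powr q" if "k < i" "i \<le> d" for i
    unfolding x_def using nonneg[of i] that k sd by (simp add: powr_divide)
  define S where "S = (\<Sum>i\<in>{k<..d}. x i powr q)"
  have Seq: "(\<Sum>i\<in>{k<..d}. s i powr q / s d powr q) = S"
    unfolding S_def by (rule sum.cong) (auto simp: xq)
  have kd: "k < d" using k km md by linarith
  have S1: "S \<ge> 1"
  proof -
    have "x d powr q \<le> S" unfolding S_def
      by (rule member_le_sum) (use kd in auto)
    moreover have "x d = 1" unfolding x_def using sd by simp
    ultimately show ?thesis by simp
  qed
  have m0: "real m > 0" using k km by linarith
  define M0 where "M0 = (2 * S / real m) powr (1 / q)"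
  have M0pos: "M0 > 0" unfolding M0_def using S1 m0 by simp
  have M0q: "M0 powr q = 2 * S / real m" unfolding M0_def
    using S1 m0 q by (simp add: powr_powr)
  have xbound: "x i \<le> M0" if i: "m < i" "i \<le> d" for i
  proof -
    have "(\<Sum>j\<in>{k<..i}. x i powr q) \<le> (\<Sum>j\<in>{k<..i}. x j powr q)"
    proof (rule sum_mono)
      fix j assume j: "j \<in> {k<..i}"
      have "x i \<le> x j" unfolding x_def using mono[of j i] j i k sd
        by (simp add: divide_right_mono)
      thus "x i powr q \<le> x j powr q" using x1[of i] i km q by (intro powr_mono2) auto
    qed
    also have "\<dots> \<le> S" unfolding S_def
      by (rule sum_mono2) (use i in auto)
    finally have "real (i - k) * x i powr q \<le> S" by simp
    moreover have "real (i - k) \<ge> real m / 2" using i km by auto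
    ultimately have "real m / 2 * x i powr q \<le> S"
      by (smt (verit) mult_right_mono powr_ge_zero)
    hence "x i powr q \<le> 2 * S / real m" using m0 by (simp add: field_simps)
    hence "(x i powr q) powr (1/q) \<le> M0" unfolding M0_def
      by (intro powr_mono2) (use q in auto)
    thus ?thesis using q x1[of i] i km by (simp add: powr_powr)
  qed
  have sq: "x i ^ 2 \<le> x i powr q * M0 powr (2 - q)" if i: "m < i" "i \<le> d" for i
  proof -
    have xp: "x i > 0" using x1[of i] i km by auto
    have "x i ^ 2 = x i powr 2" using xp by (simp add: powr_realpow)
    also have "\<dots> = x i powr q * x i powr (2 - q)" using xp by (simp add: powr_add[symmetric])
    also have "\<dots> \<le> x i powr q * M0 powr (2 - q)"
      by (intro mult_left_mono powr_mono2) (use q xp xbound[OF i] in auto)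
    finally show ?thesis .
  qed
  have "(\<Sum>i\<in>{m<..d}. (s i)\<^sup>2) / (s d)\<^sup>2 = (\<Sum>i\<in>{m<..d}. (x i)\<^sup>2)"
    unfolding x_def by (simp add: sum_divide_distrib power_divide)
  also have "\<dots> \<le> (\<Sum>i\<in>{m<..d}. x i powr q * M0 powr (2 - q))"
    by (rule sum_mono) (use sq in auto)
  also have "\<dots> = (\<Sum>i\<in>{m<..d}. x i powr q) * M0 powr (2 - q)"
    by (simp add: sum_distrib_right)
  also have "\<dots> \<le> S * M0 powr (2 - q)" unfolding S_def
    by (intro mult_right_mono sum_mono2) (use km in auto)
  finally have A: "(\<Sum>i\<in>{m<..d}. (s i)\<^sup>2) / (s d)\<^sup>2 \<le> S * M0 powr (2 - q)" .
  have "(1 / real m) * (\<Sum>i\<in>{m<..d}. (s i)\<^sup>2) / (s d)\<^sup>2 \<le> S * M0 powr (2 - q) / real m"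
  proof -
    have "(1 / real m) * (\<Sum>i\<in>{m<..d}. (s i)\<^sup>2) / (s d)\<^sup>2 = ((\<Sum>i\<in>{m<..d}. (s i)\<^sup>2) / (s d)\<^sup>2) / real m"
      by simp
    also have "\<dots> \<le> S * M0 powr (2 - q) / real m" using divide_right_mono[OF A, of "real m"] m0 by simp
    finally show ?thesis .
  qed
  also have "\<dots> = M0 powr q * M0 powr (2 - q) / 2" using M0q m0 by simp
  also have "\<dots> = M0 ^ 2 / 2" using M0pos by (simp add: powr_add[symmetric] powr_realpow)
  also have "\<dots> \<le> M0 ^ 2" by simp
  finally have "sqrt ((1 / real m) * (\<Sum>i\<in>{m<..d}. (s i)\<^sup>2) / (s d)\<^sup>2) \<le> sqrt (M0 ^ 2)"
    by (rule real_sqrt_le_mono)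
  also have "\<dots> = M0" using M0pos by simp
  finally show ?thesis unfolding Seq M0_def .
qed



lemma quad:
  fixes p \<eta> t :: real
  assumes p: "p \<ge> 1" and e: "\<eta> > 0"
  shows "- p * (t - 1)\<^sup>2 + t\<^sup>2 * (p / (1 + p * \<eta>)) + t
    \<le> p * ((1 + 1 / (2 * p))\<^sup>2 - 1) + (1 + 1 / (2 * p))\<^sup>2 / \<eta>"
proof -
  define A where "A = p^2 * \<eta> / (1 + p * \<eta>)"
  define B where "B = 2 * p + 1"
  have pe: "1 + p * \<eta> > 0" using p e by (smt (verit) mult_pos_pos)
  have A0: "A > 0" unfolding A_def using p e pe by simp
  have L: "- p * (t - 1)\<^sup>2 + t\<^sup>2 * (p / (1 + p * \<eta>)) + t = - A * t^2 + B * t - p"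
    unfolding A_def B_def using pe by (simp add: field_simps power2_eq_square)
  have R: "p * ((1 + 1 / (2 * p))\<^sup>2 - 1) + (1 + 1 / (2 * p))\<^sup>2 / \<eta> = B^2 / (4 * A) - p"
    unfolding A_def B_def using pe p e by (simp add: field_simps power2_eq_square)
  have "0 \<le> (2 * A * t - B)^2 / (4 * A)" using A0 by simp
  also have "(2 * A * t - B)^2 / (4 * A) = B^2 / (4 * A) - (- A * t^2 + B * t)"
    using A0 by (simp add: field_simps power2_eq_square)
  finally show ?thesis unfolding L R by simp
qed



lemma kprev_bound:
  fixes d k t :: nat and \<alpha> :: real
  assumes k: "1 \<le> k" "2 * k \<le> d" and a: "\<alpha> \<ge> 1" and t: "1 \<le> t" "t \<le> Tpar d k \<alpha>"
  shows "real (kseq d k \<alpha> (t - 1)) \<le> 2 * real d * exp (- \<alpha> * (real t - 1)\<^sup>2)"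
proof -
  define L where "L = ln (real d / (2 * real k))"
  define r where "r = sqrt (L / \<alpha>)"
  have L0: "L \<ge> 0" unfolding L_def using k by simp
  have r0: "r \<ge> 0" unfolding r_def using L0 a by simp
  have "real t \<le> real (nat \<lceil>r\<rceil>)" using t unfolding Tpar_def r_def L_def by simp
  also have "\<dots> = of_int \<lceil>r\<rceil>" using r0 by simp
  also have "\<dots> < r + 1" by linarith
  finally have tr: "real t - 1 < r" by simp
  have "(real t - 1)\<^sup>2 \<le> r\<^sup>2" using tr t(1) by (intro power_mono) auto
  also have "\<dots> = L / \<alpha>" unfolding r_def using L0 a by simp
  finally have "\<alpha> * (real t - 1)\<^sup>2 \<le> L" using a by (simp add: field_simps)
  hence "exp (- \<alpha> * (real t - 1)\<^sup>2) \<ge> exp (- L)" by simp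
  also have "exp (- L) = 2 * real k / real d" unfolding L_def using k
    by (simp add: exp_minus)
  finally have "2 * real k \<le> real d * exp (- \<alpha> * (real t - 1)\<^sup>2)" using k
    by (simp add: field_simps)
  moreover define y where "y = real d * exp (- \<alpha> * (real t - 1)\<^sup>2)"
  ultimately have y: "2 * real k \<le> y" by simp
  have y1: "y \<ge> 1" using y k by linarith
  have eq: "real (t - 1) = real t - 1" using t by simp
  have "real (nat \<lceil>y\<rceil>) \<le> 2 * y" using y1 by linarith
  moreover have "real (2 * k) \<le> 2 * y" using y y1 by simp
  ultimately show ?thesis unfolding kseq_def y_def eq by simp
qed

lemma kcur_bound:
  fixes d k t :: nat and \<alpha> :: real
  shows "real d \<le> real (kseq d k \<alpha> t) * exp (\<alpha> * (real t)\<^sup>2)"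
proof -
  define y where "y = real d * exp (- \<alpha> * (real t)\<^sup>2)"
  have "y \<le> real (kseq d k \<alpha> t)" unfolding kseq_def y_def by linarith
  hence "y * exp (\<alpha> * (real t)\<^sup>2) \<le> real (kseq d k \<alpha> t) * exp (\<alpha> * (real t)\<^sup>2)"
    by (simp add: mult_right_mono)
  moreover have "y * exp (\<alpha> * (real t)\<^sup>2) = real d" unfolding y_def
    by (simp add: mult.assoc exp_add[symmetric])
  ultimately show ?thesis by simp
qed

lemma kcur_le:
  fixes d k t :: nat and \<alpha> :: real
  assumes "2 * k \<le> d" and a0: "\<alpha> \<ge> 0"
  shows "kseq d k \<alpha> t \<le> d"
proof -
  have "exp (- \<alpha> * (real t)\<^sup>2) \<le> 1" using a0 by simp
  hence "real d * exp (- \<alpha> * (real t)\<^sup>2) \<le> real d"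
    by (metis mult.right_neutral mult_left_mono of_nat_0_le_iff)
  hence "nat \<lceil>real d * exp (- \<alpha> * (real t)\<^sup>2)\<rceil> \<le> d" by (simp add: nat_le_iff ceiling_le_iff)
  thus ?thesis unfolding kseq_def using assms by simp
qed



theorem lemma4p12:
  "\<exists>C::real. \<forall>(n::nat) (d::nat) (A::real mat) (k::nat) (\<alpha>::real) (p::real) (\<eta>::real) (t::nat).
     A \<in> carrier_mat n d \<and> n \<ge> d \<and> full_col_rank A \<and>
     1 \<le> k \<and> k \<le> d \<and> 2 * k \<le> d \<and> \<alpha> \<ge> 1 \<and>
     1 \<le> p \<and> p \<le> 100 \<and> 0 < \<eta> \<and> \<eta> < 1 \<and>
     1 \<le> t \<and> t \<le> Tpar d k \<alpha>
     \<longrightarrow>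
     (let c = 1 + 1 / (2 * p) in
       (real (kseq d k \<alpha> (t - 1))) powr p
         * sqrt (SigmaBar (kseq d k \<alpha> t) A / (sigma A d)\<^sup>2) * exp (\<alpha> * real t)
       \<le> C * ((real d) powr p * kappaBar k (1 / p + \<eta>) A
              * exp (\<alpha> * (p * (c\<^sup>2 - 1) + c\<^sup>2 / \<eta>))))"
proof (intro exI[of _ "2 powr 200"] allI impI)
  fix n d :: nat and A :: "real mat" and k :: nat and \<alpha> p \<eta> :: real and t :: nat
  assume H: "A \<in> carrier_mat n d \<and> n \<ge> d \<and> full_col_rank A \<and>
     1 \<le> k \<and> k \<le> d \<and> 2 * k \<le> d \<and> \<alpha> \<ge> 1 \<and>
     1 \<le> p \<and> p \<le> 100 \<and> 0 < \<eta> \<and> \<eta> < 1 \<and>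
     1 \<le> t \<and> t \<le> Tpar d k \<alpha>"
  hence A: "A \<in> carrier_mat n d" and k: "1 \<le> k" "2 * k \<le> d" and a: "\<alpha> \<ge> 1"
    and p: "1 \<le> p" "p \<le> 100" and e: "0 < \<eta>" "\<eta> < 1" and t: "1 \<le> t" "t \<le> Tpar d k \<alpha>"
    by auto
  define c where "c = 1 + 1 / (2 * p)"
  define q where "q = 1 / p + \<eta>"
  define m where "m = kseq d k \<alpha> t"
  define m' where "m' = kseq d k \<alpha> (t - 1)"
  define \<sigma> where "\<sigma> = sigma A d"
  define \<kappa> where "\<kappa> = kappaBar k q A"
  have dc: "dim_col A = d" using A by simp
  have sv: "length (sing_vals A) = d \<and> (\<forall>i<d. sing_vals A ! i \<ge> 0) \<and>
    (\<forall>i j. i \<le> j \<longrightarrow> j < d \<longrightarrow> sing_vals A ! j \<le> sing_vals A ! i)"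
    by (rule sing_vals_props[OF A])
  have nonneg: "sigma A i \<ge> 0" if "1 \<le> i" "i \<le> d" for i
    using sv that unfolding sigma_def by auto
  have mono: "sigma A j \<le> sigma A i" if "1 \<le> i" "i \<le> j" "j \<le> d" for i j
    using sv that unfolding sigma_def by auto
  have q: "0 < q" "q < 2"
  proof -
    have "1 / p \<le> 1" "1 / p > 0" using p by auto
    thus "0 < q" "q < 2" unfolding q_def using e by linarith+
  qed
  have \<kappa>0: "\<kappa> \<ge> 0" unfolding \<kappa>_def kappaBar_def by simp
  show "let c = 1 + 1 / (2 * p) in
       (real (kseq d k \<alpha> (t - 1))) powr p
         * sqrt (SigmaBar (kseq d k \<alpha> t) A / (sigma A d)\<^sup>2) * exp (\<alpha> * real t)
       \<le> 2 powr 200 * ((real d) powr p * kappaBar k (1 / p + \<eta>) A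
              * exp (\<alpha> * (p * (c\<^sup>2 - 1) + c\<^sup>2 / \<eta>)))"
  proof (cases "\<sigma> = 0")
    case True
    thus ?thesis unfolding \<sigma>_def by (simp add: Let_def kappaBar_def)
  next
    case False
    hence sp: "\<sigma> > 0" using nonneg[of d] k unfolding \<sigma>_def by simp
    have kd: "k < d" using k by linarith
    have m2k: "2 * k \<le> m" unfolding m_def kseq_def by simp
    have md: "m \<le> d" unfolding m_def by (rule kcur_le[OF k(2)]) (use a in simp)
    have m0: "real m > 0" using m2k k by simp
    define S where "S = (\<Sum>i\<in>{k<..d}. sigma A i powr q / sigma A d powr q)"
    have S0: "S \<ge> 0" unfolding S_def by (auto intro: sum_nonneg)
    have core1: "sqrt (SigmaBar m A / \<sigma>\<^sup>2) \<le> (2 * S / real m) powr (1 / q)"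
      unfolding SigmaBar_def dc \<sigma>_def S_def
      by (rule core[of d "sigma A" k m q]) (use nonneg mono k m2k md q sp \<sigma>_def in auto)
    have dk0: "real (d - k) > 0" using kd by simp
    have \<kappa>eq: "\<kappa> = (S / real (d - k)) powr (1 / q)"
      unfolding \<kappa>_def kappaBar_def dc S_def by simp
    have gen: "2 * S / real m = (2 * r / real m) * (S / r)" if "r \<noteq> 0" for r
      using that by (simp add: field_simps)
    have eqn: "2 * S / real m = (2 * real (d - k) / real m) * (S / real (d - k))"
      using dk0 by (intro gen) simp
    have "(2 * S / real m) powr (1 / q) = (2 * real (d - k) / real m) powr (1 / q) * (S / real (d - k)) powr (1 / q)"
      unfolding eqn using S0 by (intro powr_mult; simp)
    hence "(2 * S / real m) powr (1 / q) = (2 * real (d - k) / real m) powr (1 / q) * \<kappa>"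
      unfolding \<kappa>eq .
    also have "\<dots> \<le> (2 * exp (\<alpha> * (real t)\<^sup>2)) powr (1 / q) * \<kappa>"
    proof (intro mult_right_mono powr_mono2 \<kappa>0)
      have "real (d - k) \<le> real d" by simp
      also have "real d \<le> real m * exp (\<alpha> * (real t)\<^sup>2)" unfolding m_def by (rule kcur_bound)
      finally show "2 * real (d - k) / real m \<le> 2 * exp (\<alpha> * (real t)\<^sup>2)"
        using m0 by (simp add: field_simps)
    qed (use q m0 in auto)
    also have "\<dots> = 2 powr (1 / q) * exp (\<alpha> * (real t)\<^sup>2 * (1 / q)) * \<kappa>"
      by (simp add: powr_mult powr_def ln_mult exp_add[symmetric] add_divide_distrib)
    also have "\<dots> \<le> 2 powr 100 * exp (\<alpha> * (real t)\<^sup>2 * (1 / q)) * \<kappa>"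
    proof -
      have pq: "1 / p \<le> q" "1 / p > 0" unfolding q_def using p e by auto
      have "1 / q \<le> 1 / (1 / p)"
        by (rule divide_left_mono) (use pq q in auto)
      hence "1 / q \<le> p" by simp
      hence "2 powr (1 / q) \<le> 2 powr 100" using p by (intro powr_mono) auto
      thus ?thesis using \<kappa>0 by (simp add: mult_right_mono)
    qed
    finally have B1: "sqrt (SigmaBar m A / \<sigma>\<^sup>2) \<le> 2 powr 100 * exp (\<alpha> * (real t)\<^sup>2 * (1 / q)) * \<kappa>"
      using core1 by linarith
    have m'b: "real m' \<le> 2 * real d * exp (- \<alpha> * (real t - 1)\<^sup>2)"
      unfolding m'_def by (rule kprev_bound[OF k a t])
    have "real m' powr p \<le> (2 * real d * exp (- \<alpha> * (real t - 1)\<^sup>2)) powr p"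
      by (rule powr_mono2) (use p m'b in auto)
    also have "\<dots> = 2 powr p * real d powr p * exp (- \<alpha> * (real t - 1)\<^sup>2 * p)"
      by (simp add: powr_mult powr_def ln_mult exp_add[symmetric] algebra_simps)
    also have "\<dots> \<le> 2 powr 100 * real d powr p * exp (- \<alpha> * (real t - 1)\<^sup>2 * p)"
    proof -
      have "(2::real) powr p \<le> 2 powr 100" using p by (intro powr_mono) auto
      thus ?thesis by (intro mult_right_mono) auto
    qed
    finally have B2: "real m' powr p \<le> 2 powr 100 * real d powr p * exp (- \<alpha> * (real t - 1)\<^sup>2 * p)" .
    have "real m' powr p * sqrt (SigmaBar m A / \<sigma>\<^sup>2) * exp (\<alpha> * real t)
      \<le> (2 powr 100 * real d powr p * exp (- \<alpha> * (real t - 1)\<^sup>2 * p))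
         * (2 powr 100 * exp (\<alpha> * (real t)\<^sup>2 * (1 / q)) * \<kappa>) * exp (\<alpha> * real t)"
    proof -
      have "SigmaBar m A / \<sigma>\<^sup>2 \<ge> 0" unfolding SigmaBar_def
        by (auto intro!: divide_nonneg_nonneg mult_nonneg_nonneg sum_nonneg)
      thus ?thesis by (intro mult_right_mono mult_mono B1 B2) (auto simp: \<kappa>0)
    qed
    also have "\<dots> = 2 powr 200 * (real d powr p * \<kappa>) *
        exp (\<alpha> * (- p * (real t - 1)\<^sup>2 + (real t)\<^sup>2 * (1 / q) + real t))"
    proof -
      have "(2::real) powr 100 * 2 powr 100 = 2 powr 200" by (simp add: powr_add[symmetric])
      moreover have "exp (- \<alpha> * (real t - 1)\<^sup>2 * p) * exp (\<alpha> * (real t)\<^sup>2 * (1 / q)) * exp (\<alpha> * real t)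
        = exp (\<alpha> * (- p * (real t - 1)\<^sup>2 + (real t)\<^sup>2 * (1 / q) + real t))"
        by (simp add: exp_add[symmetric] algebra_simps)
      ultimately show ?thesis by (simp add: algebra_simps)
    qed
    also have "\<dots> \<le> 2 powr 200 * (real d powr p * \<kappa>) * exp (\<alpha> * (p * (c\<^sup>2 - 1) + c\<^sup>2 / \<eta>))"
    proof -
      have "1 / q = p / (1 + p * \<eta>)" unfolding q_def using p by (simp add: field_simps)
      hence "- p * (real t - 1)\<^sup>2 + (real t)\<^sup>2 * (1 / q) + real t \<le> p * (c\<^sup>2 - 1) + c\<^sup>2 / \<eta>"
        unfolding c_def using quad[OF p(1) e(1), of "real t"] by simp
      hence "exp (\<alpha> * (- p * (real t - 1)\<^sup>2 + (real t)\<^sup>2 * (1 / q) + real t))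
        \<le> exp (\<alpha> * (p * (c\<^sup>2 - 1) + c\<^sup>2 / \<eta>))" using a by simp
      thus ?thesis using \<kappa>0 by (intro mult_left_mono) auto
    qed
    finally show ?thesis unfolding Let_def c_def[symmetric] m_def m'_def \<sigma>_def \<kappa>_def q_def
      by (simp add: mult.assoc)
  qed
qed

end
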